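(* Let $G$ be a graph on $[n]$ which is a noncrossing bond of itself (i.e. the partition of $[n]$ into the vertex sets of the connected components of $G$ is noncrossing). Then $NC_G$ is graded if and only if for every cover relation $H\lessdot H'$ in $NC_G$, the partition $\pi(H')$ is obtained from $\pi(H)$ by merging exactly two blocks. Moreover, when $NC_G$ is graded, its rank function is $\rho(H)=n-cc(H)$, where $cc(H)$ is the number of connected components of $H$.
   Context: All graphs are finite simple graphs with vertex set $[n]=\{1,\dots,n\}$; edges are written $ij$ with $i<j$. A spanning subgraph is identified with its edge set. A bond of $G$ is a spanning subgraph each of whose connected components is an induced subgraph of $G$. For a bond $H$, $\pi(H)$ is the set partition of $[n]$ whose blocks are the vertex sets of the connected components of $H$. A set partition is crossing if there are distinct blocks $B,B'$ and $a,c\in B$, $b,d\in B'$ with $a<b<c<d$, and noncrossing otherwise; a bond $H$ is noncrossing if $\pi(H)$ is. $NC_G$ is the poset of noncrossing bonds of $G$ ordered by inclusion of edge sets. *)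

theory Defs
  imports Main
begin

text \<open>A finite simple graph on [n] = {1..n}: a set of edges (i,j) with 1 \<le> i < j \<le> n.
  Spanning subgraphs are identified with their edge sets.\<close>

definition simple_graph :: "nat \<Rightarrow> (nat \<times> nat) set \<Rightarrow> bool" where
  "simple_graph n E \<longleftrightarrow> E \<subseteq> {(i, j). 1 \<le> i \<and> i < j \<and> j \<le> n}"

definition component :: "nat \<Rightarrow> (nat \<times> nat) set \<Rightarrow> nat \<Rightarrow> nat set" where
  "component n H v = {u \<in> {1..n}. (v, u) \<in> (H \<union> H\<inverse>)\<^sup>*}"

definition comp_partition :: "nat \<Rightarrow> (nat \<times> nat) set \<Rightarrow> nat set set" where
  "comp_partition n H = component n H ` {1..n}"

definition cc :: "nat \<Rightarrow> (nat \<times> nat) set \<Rightarrow> nat" where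
  "cc n H = card (comp_partition n H)"

definition is_bond :: "nat \<Rightarrow> (nat \<times> nat) set \<Rightarrow> (nat \<times> nat) set \<Rightarrow> bool" where
  "is_bond n G H \<longleftrightarrow> H \<subseteq> G \<and>
     (\<forall>B \<in> comp_partition n H. \<forall>i j. (i, j) \<in> G \<and> i \<in> B \<and> j \<in> B \<longrightarrow> (i, j) \<in> H)"

definition crossing :: "nat set set \<Rightarrow> bool" where
  "crossing P \<longleftrightarrow> (\<exists>B \<in> P. \<exists>B' \<in> P. B \<noteq> B' \<and>
     (\<exists>a b c d. a \<in> B \<and> c \<in> B \<and> b \<in> B' \<and> d \<in> B' \<and> a < b \<and> b < c \<and> c < d))"

definition noncrossing :: "nat set set \<Rightarrow> bool" where
  "noncrossing P \<longleftrightarrow> \<not> crossing P"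

definition noncrossing_bond :: "nat \<Rightarrow> (nat \<times> nat) set \<Rightarrow> (nat \<times> nat) set \<Rightarrow> bool" where
  "noncrossing_bond n G H \<longleftrightarrow> is_bond n G H \<and> noncrossing (comp_partition n H)"

definition NC :: "nat \<Rightarrow> (nat \<times> nat) set \<Rightarrow> (nat \<times> nat) set set" where
  "NC n G = {H. noncrossing_bond n G H}"

text \<open>Generic notions for a poset given as a family P of sets ordered by inclusion.\<close>

definition covers :: "'a set set \<Rightarrow> 'a set \<Rightarrow> 'a set \<Rightarrow> bool" where
  "covers P x y \<longleftrightarrow> x \<in> P \<and> y \<in> P \<and> x \<subset> y \<and> \<not> (\<exists>z \<in> P. x \<subset> z \<and> z \<subset> y)"

definition is_chain :: "'a set set \<Rightarrow> 'a set set \<Rightarrow> bool" where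
  "is_chain P C \<longleftrightarrow> C \<subseteq> P \<and> (\<forall>x \<in> C. \<forall>y \<in> C. x \<subseteq> y \<or> y \<subseteq> x)"

definition maximal_chain :: "'a set set \<Rightarrow> 'a set set \<Rightarrow> bool" where
  "maximal_chain P C \<longleftrightarrow> is_chain P C \<and> \<not> (\<exists>D. is_chain P D \<and> C \<subset> D)"

definition graded :: "'a set set \<Rightarrow> bool" where
  "graded P \<longleftrightarrow> (\<forall>C D. maximal_chain P C \<and> maximal_chain P D \<longrightarrow> card C = card D)"

text \<open>Rank of x: length (number of elements minus one) of a longest chain with top element x;
  for a graded poset this is its rank function.\<close>
definition poset_rank :: "'a set set \<Rightarrow> 'a set \<Rightarrow> nat" where
  "poset_rank P x = Max {card C - 1 | C. is_chain P C \<and> finite C \<and> x \<in> C \<and> (\<forall>y \<in> C. y \<subseteq> x)}"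

definition merges_two_blocks :: "'a set set \<Rightarrow> 'a set set \<Rightarrow> bool" where
  "merges_two_blocks p p' \<longleftrightarrow> (\<exists>B1 \<in> p. \<exists>B2 \<in> p. B1 \<noteq> B2 \<and> p' = (p - {B1, B2}) \<union> {B1 \<union> B2})"

end

theory Submission
  imports Defs
begin

definition sat :: "'a set set \<Rightarrow> 'a set set \<Rightarrow> 'a set \<Rightarrow> 'a set \<Rightarrow> bool" where
 "sat P C lo hi \<longleftrightarrow> is_chain P C \<and> lo \<in> C \<and> hi \<in> C \<and> (\<forall>x\<in>C. lo \<subseteq> x \<and> x \<subseteq> hi) \<and>
    (\<forall>z\<in>P. lo \<subseteq> z \<and> z \<subseteq> hi \<and> (\<forall>x\<in>C. x \<subseteq> z \<or> z \<subseteq> x) \<longrightarrow> z \<in> C)"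

lemma satD:
  assumes "sat P C lo hi"
  shows "C \<subseteq> P" "\<And>x y. x \<in> C \<Longrightarrow> y \<in> C \<Longrightarrow> x \<subseteq> y \<or> y \<subseteq> x" "lo \<in> C" "hi \<in> C"
    "\<And>x. x \<in> C \<Longrightarrow> lo \<subseteq> x" "\<And>x. x \<in> C \<Longrightarrow> x \<subseteq> hi"
    "\<And>z. z \<in> P \<Longrightarrow> lo \<subseteq> z \<Longrightarrow> z \<subseteq> hi \<Longrightarrow> (\<And>x. x \<in> C \<Longrightarrow> x \<subseteq> z \<or> z \<subseteq> x) \<Longrightarrow> z \<in> C"
proof -
  show "C \<subseteq> P" using assms unfolding sat_def is_chain_def by simp
  show "\<And>x y. x \<in> C \<Longrightarrow> y \<in> C \<Longrightarrow> x \<subseteq> y \<or> y \<subseteq> x" using assms unfolding sat_def is_chain_def by simp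
  show "lo \<in> C" "hi \<in> C" using assms unfolding sat_def by simp_all
  show "\<And>x. x \<in> C \<Longrightarrow> lo \<subseteq> x" "\<And>x. x \<in> C \<Longrightarrow> x \<subseteq> hi" using assms unfolding sat_def by simp_all
  show "\<And>z. z \<in> P \<Longrightarrow> lo \<subseteq> z \<Longrightarrow> z \<subseteq> hi \<Longrightarrow> (\<And>x. x \<in> C \<Longrightarrow> x \<subseteq> z \<or> z \<subseteq> x) \<Longrightarrow> z \<in> C"
    using assms unfolding sat_def by simp
qed

lemma chain_max:
  assumes "finite C" "C \<noteq> {}" "\<forall>x\<in>C. \<forall>y\<in>C. x \<subseteq> y \<or> y \<subseteq> x"
  shows "\<exists>m\<in>C. \<forall>x\<in>C. x \<subseteq> m"
  using assms
proof (induction C rule: finite_ne_induct)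
  case (singleton x) then show ?case by auto
next
  case (insert x F)
  then obtain m where m: "m \<in> F" "\<forall>y\<in>F. y \<subseteq> m" by auto
  have "x \<subseteq> m \<or> m \<subseteq> x" using insert.prems m(1) by auto
  then show ?case using m by auto
qed

lemma sat_card:
  assumes "finite P" "\<And>x y. covers P x y \<Longrightarrow> f y = f x + (1::nat)" "sat P C lo hi"
  shows "card C + f lo = f hi + 1"
  using assms(3)
proof (induction "card C" arbitrary: C hi rule: less_induct)
  case less
  note S = satD[OF less.prems]
  have finC: "finite C" using S(1) assms(1) finite_subset by blast
  show ?case
  proof (cases "hi = lo")
    case True
    then have "C = {lo}" using S(3,5,6) by blast
    then show ?thesis using True by simp
  next
    case False
    define C' where "C' = C - {hi}"
    have loC': "lo \<in> C'" using False S(3) unfolding C'_def by auto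
    have ch: "\<forall>x\<in>C'. \<forall>y\<in>C'. x \<subseteq> y \<or> y \<subseteq> x" using S(2) unfolding C'_def by auto
    obtain m where m: "m \<in> C'" "\<forall>x\<in>C'. x \<subseteq> m"
      using chain_max[OF _ _ ch] finC loC' unfolding C'_def by blast
    have mC: "m \<in> C" "m \<noteq> hi" using m(1) unfolding C'_def by auto
    have mhi: "m \<subset> hi" using mC S(6) by blast
    have satC': "sat P C' lo m"
      unfolding sat_def is_chain_def
    proof (intro conjI)
      show "C' \<subseteq> P" using S(1) unfolding C'_def by auto
      show "\<forall>x\<in>C'. \<forall>y\<in>C'. x \<subseteq> y \<or> y \<subseteq> x" by fact
      show "lo \<in> C'" by fact
      show "m \<in> C'" by fact
      show "\<forall>x\<in>C'. lo \<subseteq> x \<and> x \<subseteq> m" using m S(5) unfolding C'_def by auto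
      show "\<forall>z\<in>P. lo \<subseteq> z \<and> z \<subseteq> m \<and> (\<forall>x\<in>C'. x \<subseteq> z \<or> z \<subseteq> x) \<longrightarrow> z \<in> C'"
      proof (intro ballI impI)
        fix z assume z: "z \<in> P" "lo \<subseteq> z \<and> z \<subseteq> m \<and> (\<forall>x\<in>C'. x \<subseteq> z \<or> z \<subseteq> x)"
        have zhi: "z \<subset> hi" using z mhi by blast
        have cmp: "x \<subseteq> z \<or> z \<subseteq> x" if "x \<in> C" for x
        proof (cases "x = hi")
          case True then show ?thesis using zhi by blast
        next
          case False then show ?thesis using z that unfolding C'_def by blast
        qed
        have "z \<in> C" using S(7)[OF z(1) _ _ cmp] z zhi by blast
        then show "z \<in> C'" using zhi unfolding C'_def by auto
      qed
    qed
    have cov: "covers P m hi"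
      unfolding covers_def
    proof (intro conjI)
      show "m \<in> P" using mC S(1) by auto
      show "hi \<in> P" using S(1,4) by auto
      show "m \<subset> hi" by fact
      show "\<not> (\<exists>z\<in>P. m \<subset> z \<and> z \<subset> hi)"
      proof
        assume "\<exists>z\<in>P. m \<subset> z \<and> z \<subset> hi"
        then obtain z where z: "z \<in> P" "m \<subset> z" "z \<subset> hi" by auto
        have cmp: "x \<subseteq> z \<or> z \<subseteq> x" if "x \<in> C" for x
        proof (cases "x = hi")
          case True then show ?thesis using z by blast
        next
          case False then have "x \<subseteq> m" using m that unfolding C'_def by blast
          then show ?thesis using z by blast
        qed
        have "lo \<subseteq> z" using S(5)[OF mC(1)] z by blast
        then have "z \<in> C" using S(7)[OF z(1) _ _ cmp] z by blast
        then have "z \<in> C'" using z unfolding C'_def by auto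
        then show False using z m by blast
      qed
    qed
    have "card C' < card C" using finC S(4) unfolding C'_def
      by (meson card_Diff1_less)
    then have "card C' + f lo = f m + 1" using less.hyps satC' by blast
    moreover have "card C = card C' + 1" using card.remove[OF finC S(4)] unfolding C'_def
      by simp
    moreover have "f hi = f m + 1" using assms(2) cov by blast
    ultimately show ?thesis by simp
  qed
qed

lemma maximal_sat:
  assumes "maximal_chain P C" "b \<in> P" "t \<in> P" "\<forall>x\<in>P. b \<subseteq> x \<and> x \<subseteq> t"
  shows "sat P C b t"
proof -
  have ch: "is_chain P C" using assms(1) unfolding maximal_chain_def by auto
  have ins: "z \<in> C" if "z \<in> P" "\<forall>x\<in>C. x \<subseteq> z \<or> z \<subseteq> x" for z
  proof (rule ccontr)
    assume "z \<notin> C"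
    have "is_chain P (insert z C)" using ch that unfolding is_chain_def by auto
    moreover have "C \<subset> insert z C" using \<open>z \<notin> C\<close> by auto
    ultimately show False using assms(1) unfolding maximal_chain_def by blast
  qed
  have bC: "b \<in> C"
  proof (rule ins)
    show "b \<in> P" by fact
    show "\<forall>x\<in>C. x \<subseteq> b \<or> b \<subseteq> x" using ch assms(4) unfolding is_chain_def by blast
  qed
  have tC: "t \<in> C"
  proof (rule ins)
    show "t \<in> P" by fact
    show "\<forall>x\<in>C. x \<subseteq> t \<or> t \<subseteq> x" using ch assms(4) unfolding is_chain_def by blast
  qed
  have CP: "C \<subseteq> P" using ch unfolding is_chain_def by simp
  show ?thesis unfolding sat_def
  proof (intro conjI)
    show "is_chain P C" by fact
    show "b \<in> C" "t \<in> C" by fact+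
    show "\<forall>x\<in>C. b \<subseteq> x \<and> x \<subseteq> t" using CP assms(4) by blast
    show "\<forall>z\<in>P. b \<subseteq> z \<and> z \<subseteq> t \<and> (\<forall>x\<in>C. x \<subseteq> z \<or> z \<subseteq> x) \<longrightarrow> z \<in> C"
      using ins by blast
  qed
qed

lemma sat_maximal:
  assumes "sat P C b t" "\<forall>x\<in>P. b \<subseteq> x \<and> x \<subseteq> t"
  shows "maximal_chain P C"
  unfolding maximal_chain_def
proof (intro conjI notI)
  show "is_chain P C" using assms unfolding sat_def by auto
  assume "\<exists>D. is_chain P D \<and> C \<subset> D"
  then obtain D z where D: "is_chain P D" "C \<subset> D" "z \<in> D" "z \<notin> C" by blast
  have "z \<in> P" using D unfolding is_chain_def by auto
  moreover have "\<forall>x\<in>C. x \<subseteq> z \<or> z \<subseteq> x" using D unfolding is_chain_def by blast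
  ultimately have "z \<in> C" using satD(7)[OF assms(1)] assms(2) by blast
  then show False using D by auto
qed

lemma exists_maximal:
  assumes "finite P" "is_chain P C"
  shows "\<exists>D. maximal_chain P D \<and> C \<subseteq> D"
proof -
  define Q where "Q = {D. is_chain P D \<and> C \<subseteq> D}"
  have finQ: "finite Q"
    by (rule finite_subset[of Q "Pow P"]) (auto simp: Q_def is_chain_def assms(1))
  have "C \<in> Q" using assms unfolding Q_def by auto
  define M where "M = Max (card ` Q)"
  have "M \<in> card ` Q" unfolding M_def using finQ \<open>C \<in> Q\<close> by (intro Max_in) auto
  then obtain D where D1: "D \<in> Q" "card D = M" by auto
  have D: "D \<in> Q" "\<forall>D'\<in>Q. card D' \<le> card D"
    using D1 finQ unfolding M_def by auto
  have "maximal_chain P D"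
    unfolding maximal_chain_def
  proof (intro conjI notI)
    show "is_chain P D" using D unfolding Q_def by auto
    assume "\<exists>D'. is_chain P D' \<and> D \<subset> D'"
    then obtain D' where "is_chain P D'" "D \<subset> D'" by auto
    moreover have "finite D'" using \<open>is_chain P D'\<close> assms(1) unfolding is_chain_def by (meson finite_subset)
    ultimately have "card D < card D'" by (simp add: psubset_card_mono)
    moreover have "D' \<in> Q" using D \<open>is_chain P D'\<close> \<open>D \<subset> D'\<close> unfolding Q_def by blast
    ultimately show False using D(2) by fastforce
  qed
  then show ?thesis using D unfolding Q_def by auto
qed


definition pf :: "'b set \<Rightarrow> ('b \<Rightarrow> 'b set) \<Rightarrow> bool" where
  "pf S c \<longleftrightarrow> (\<forall>v\<in>S. c v = {x\<in>S. c x = c v})"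

lemma pf_eq: assumes "pf S c" "v \<in> S" shows "c v = {x\<in>S. c x = c v}"
  using assms(1)[unfolded pf_def] assms(2) by (rule bspec)

lemma pf_mem: "pf S c \<Longrightarrow> v \<in> S \<Longrightarrow> x \<in> S \<Longrightarrow> x \<in> c v \<longleftrightarrow> c x = c v"
  unfolding pf_def by blast

lemma pf_self: "pf S c \<Longrightarrow> v \<in> S \<Longrightarrow> v \<in> c v"
  unfolding pf_def by blast

lemma pf_sub: "pf S c \<Longrightarrow> v \<in> S \<Longrightarrow> c v \<subseteq> S"
  unfolding pf_def by blast

lemma refine_kernel:
  assumes "pf S c" "pf S c'" "\<forall>v\<in>S. c v \<subseteq> c' v" "u \<in> S" "v \<in> S" "c u = c v"
  shows "c' u = c' v"
proof -
  have "u \<in> c v" using pf_self[OF assms(1,4)] assms(6) by simp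
  then have "u \<in> c' v" using assms(3,5) by blast
  then show ?thesis using pf_mem[OF assms(2,5,4)] by simp
qed

lemma card_refine:
  assumes fin: "finite S" and pc: "pf S c" and pc': "pf S c'" and ref: "\<forall>v\<in>S. c v \<subseteq> c' v"
  shows "card (c' ` S) \<le> card (c ` S) \<and>
    (card (c' ` S) = card (c ` S) \<longleftrightarrow> (\<forall>u\<in>S. \<forall>v\<in>S. c' u = c' v \<longrightarrow> c u = c v))"
proof -
  define k where "k B = c' (SOME v. v \<in> S \<and> c v = B)" for B
  have kc: "k (c v) = c' v" if "v \<in> S" for v
  proof -
    have ex: "\<exists>w. w \<in> S \<and> c w = c v" using that by blast
    define w where "w = (SOME w. w \<in> S \<and> c w = c v)"
    have w: "w \<in> S \<and> c w = c v" unfolding w_def using someI_ex[OF ex] .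
    have "c' w = c' v" using refine_kernel[OF pc pc' ref] w that by blast
    then show ?thesis unfolding k_def w_def[symmetric] by simp
  qed
  have img: "c' ` S = k ` (c ` S)"
    unfolding image_image using kc by (auto simp: image_iff)
  have fc: "finite (c ` S)" using fin by simp
  have inj: "inj_on k (c ` S) \<longleftrightarrow> (\<forall>u\<in>S. \<forall>v\<in>S. c' u = c' v \<longrightarrow> c u = c v)"
    unfolding inj_on_def using kc by auto
  have "card (c' ` S) \<le> card (c ` S)" unfolding img by (rule card_image_le[OF fc])
  moreover have "card (c' ` S) = card (c ` S) \<longleftrightarrow> inj_on k (c ` S)"
    unfolding img using fc eq_card_imp_inj_on card_image by blast
  ultimately show ?thesis using inj by simp
qed

lemma union_not_block:
  assumes "pf S c" "u \<in> S" "w \<in> S" "c u \<noteq> c w"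
  shows "c u \<union> c w \<notin> c ` S"
proof
  assume "c u \<union> c w \<in> c ` S"
  then obtain x where x: "x \<in> S" "c u \<union> c w = c x" by auto
  have "u \<in> c x" using pf_self[OF assms(1,2)] x by blast
  then have "c u = c x" using pf_mem[OF assms(1) x(1) assms(2)] by simp
  moreover have "w \<in> c x" using pf_self[OF assms(1,3)] x by blast
  then have "c w = c x" using pf_mem[OF assms(1) x(1) assms(3)] by simp
  ultimately show False using assms(4) by simp
qed

lemma merge_card:
  assumes "finite S" "pf S c" "u \<in> S" "w \<in> S" "c u \<noteq> c w"
  shows "card ((c ` S - {c u, c w}) \<union> {c u \<union> c w}) + 1 = card (c ` S)"
proof -
  have nb: "c u \<union> c w \<notin> c ` S - {c u, c w}" using union_not_block[OF assms(2-5)] by blast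
  have f: "finite (c ` S - {c u, c w})" using assms(1) by simp
  have sub: "{c u, c w} \<subseteq> c ` S" using assms by auto
  have c2: "card {c u, c w} = 2" using assms(5) by simp
  have "card (c ` S - {c u, c w}) = card (c ` S) - 2"
    using card_Diff_subset[OF _ sub] c2 by simp
  moreover have "card (c ` S) \<ge> 2" using card_mono[OF _ sub] c2 assms(1) by simp
  moreover have "card ((c ` S - {c u, c w}) \<union> {c u \<union> c w}) = card (c ` S - {c u, c w}) + 1"
    using nb f by simp
  ultimately show ?thesis by simp
qed

lemma merges_of_card:
  assumes fin: "finite S" and pc: "pf S c" and pc': "pf S c'" and ref: "\<forall>v\<in>S. c v \<subseteq> c' v"
    and cd: "card (c ` S) = card (c' ` S) + 1"
  shows "merges_two_blocks (c ` S) (c' ` S)"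
proof -
  have "\<not> (\<forall>u\<in>S. \<forall>v\<in>S. c' u = c' v \<longrightarrow> c u = c v)"
    using card_refine[OF fin pc pc' ref] cd by simp
  then obtain u1 u2 where u: "u1 \<in> S" "u2 \<in> S" "c' u1 = c' u2" "c u1 \<noteq> c u2" by blast
  define B1 where "B1 = c u1"
  define B2 where "B2 = c u2"
  define c'' where "c'' x = (if c x = B1 \<or> c x = B2 then B1 \<union> B2 else c x)" for x
  have nb: "\<And>x. x \<in> S \<Longrightarrow> c x \<noteq> B1 \<union> B2"
    using union_not_block[OF pc u(1,2,4)] unfolding B1_def B2_def by blast
  have U: "B1 \<union> B2 = {x\<in>S. c x = B1 \<or> c x = B2}"
    using pf_eq[OF pc u(1)] pf_eq[OF pc u(2)] unfolding B1_def B2_def by blast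
  have pc'': "pf S c''"
    unfolding pf_def
  proof
    fix v assume v: "v \<in> S"
    show "c'' v = {x\<in>S. c'' x = c'' v}"
    proof (cases "c v = B1 \<or> c v = B2")
      case True
      then have "{x\<in>S. c'' x = c'' v} = {x\<in>S. c x = B1 \<or> c x = B2}"
        unfolding c''_def using nb by auto
      then show ?thesis using True U unfolding c''_def by simp
    next
      case False
      then have e1: "{x\<in>S. c'' x = c'' v} = {x\<in>S. c x = c v}"
        unfolding c''_def using nb v by auto
      have "c'' v = c v" using False unfolding c''_def by simp
      also have "\<dots> = {x\<in>S. c x = c v}" by (rule pf_eq[OF pc v])
      also have "\<dots> = {x\<in>S. c'' x = c'' v}" using e1 by (rule sym)
      finally show ?thesis .
    qed
  qed
  have ref'': "\<forall>v\<in>S. c'' v \<subseteq> c' v"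
  proof
    fix v assume v: "v \<in> S"
    show "c'' v \<subseteq> c' v"
    proof (cases "c v = B1 \<or> c v = B2")
      case True
      then have "c' v = c' u1" using refine_kernel[OF pc pc' ref] v u unfolding B1_def B2_def by metis
      moreover have "B1 \<subseteq> c' u1" "B2 \<subseteq> c' u2" using ref u unfolding B1_def B2_def by auto
      ultimately show ?thesis using True u(3) unfolding c''_def by auto
    next
      case False then show ?thesis using ref v unfolding c''_def by simp
    qed
  qed
  have img: "c'' ` S = (c ` S - {B1, B2}) \<union> {B1 \<union> B2}"
  proof
    show "c'' ` S \<subseteq> (c ` S - {B1, B2}) \<union> {B1 \<union> B2}" unfolding c''_def by auto
    show "(c ` S - {B1, B2}) \<union> {B1 \<union> B2} \<subseteq> c'' ` S"
    proof
      fix X assume "X \<in> (c ` S - {B1, B2}) \<union> {B1 \<union> B2}"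
      then consider "X = B1 \<union> B2" | x where "x \<in> S" "X = c x" "c x \<noteq> B1" "c x \<noteq> B2" by auto
      then show "X \<in> c'' ` S"
      proof cases
        case 1 then show ?thesis using u(1) unfolding c''_def B1_def by (auto intro!: image_eqI[of _ _ u1])
      next
        case 2 then show ?thesis unfolding c''_def by (auto intro!: image_eqI[of _ _ x])
      qed
    qed
  qed
  have "card (c'' ` S) + 1 = card (c ` S)"
    using merge_card[OF fin pc u(1,2,4)] unfolding img B1_def B2_def .
  then have ceq: "card (c' ` S) = card (c'' ` S)" using cd by linarith
  have ker: "\<forall>u\<in>S. \<forall>v\<in>S. c' u = c' v \<longrightarrow> c'' u = c'' v"
    using card_refine[OF fin pc'' pc' ref''] ceq by blast
  have "\<forall>v\<in>S. c' v = c'' v"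
  proof
    fix v assume v: "v \<in> S"
    have "c' v = {x\<in>S. c' x = c' v}" using pf_eq[OF pc' v] .
    also have "\<dots> = {x\<in>S. c'' x = c'' v}"
      using ker v refine_kernel[OF pc'' pc' ref''] by blast
    also have "\<dots> = c'' v" using pf_eq[OF pc'' v] by (rule sym)
    finally show "c' v = c'' v" .
  qed
  then have "c' ` S = c'' ` S" by (auto simp: image_iff)
  then show ?thesis unfolding merges_two_blocks_def img B1_def B2_def using u by blast
qed


lemma symR: "(a, b) \<in> (H \<union> H\<inverse>)\<^sup>* \<Longrightarrow> (b, a) \<in> (H \<union> H\<inverse>)\<^sup>*"
proof -
  assume "(a, b) \<in> (H \<union> H\<inverse>)\<^sup>*"
  then have "(b, a) \<in> ((H \<union> H\<inverse>)\<inverse>)\<^sup>*" by (rule rtrancl_converseI)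
  moreover have "(H \<union> H\<inverse>)\<inverse> = H \<union> H\<inverse>" by auto
  ultimately show ?thesis by simp
qed

lemma comp_pf: "pf {1..n} (component n H)"
  unfolding pf_def
proof
  fix v :: nat assume v: "v \<in> {1..n}"
  show "component n H v = {x \<in> {1..n}. component n H x = component n H v}"
  proof
    show "component n H v \<subseteq> {x \<in> {1..n}. component n H x = component n H v}"
    proof
      fix x assume x: "x \<in> component n H v"
      then have xS: "x \<in> {1..n}" and vx: "(v, x) \<in> (H \<union> H\<inverse>)\<^sup>*" unfolding component_def by auto
      have xv: "(x, v) \<in> (H \<union> H\<inverse>)\<^sup>*" using symR[OF vx] .
      have "component n H x = component n H v"
        unfolding component_def using vx xv by (auto intro: rtrancl_trans)
      then show "x \<in> {x \<in> {1..n}. component n H x = component n H v}" using xS by simp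
    qed
    show "{x \<in> {1..n}. component n H x = component n H v} \<subseteq> component n H v"
    proof
      fix x assume "x \<in> {x \<in> {1..n}. component n H x = component n H v}"
      then have "x \<in> {1..n}" "component n H x = component n H v" by auto
      moreover have "x \<in> component n H x" using \<open>x \<in> {1..n}\<close> unfolding component_def by simp
      ultimately show "x \<in> component n H v" by simp
    qed
  qed
qed

lemma comp_mono: "H \<subseteq> H' \<Longrightarrow> component n H v \<subseteq> component n H' v"
  unfolding component_def using rtrancl_mono[of "H \<union> H\<inverse>" "H' \<union> H'\<inverse>"] by blast

lemma cc_le: "cc n H \<le> n"
  unfolding cc_def comp_partition_def using card_image_le[of "{1..n}" "component n H"] by simp

lemma simple_in: "simple_graph n G \<Longrightarrow> (i, j) \<in> G \<Longrightarrow> i \<in> {1..n} \<and> j \<in> {1..n} \<and> i < j"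
  unfolding simple_graph_def by auto

lemma bond_char:
  assumes "simple_graph n G" "is_bond n G H"
  shows "(i, j) \<in> H \<longleftrightarrow> (i, j) \<in> G \<and> component n H i = component n H j"
proof
  assume ij: "(i, j) \<in> H"
  have G: "(i, j) \<in> G" using ij assms(2) unfolding is_bond_def by auto
  then have S: "i \<in> {1..n}" "j \<in> {1..n}" using simple_in[OF assms(1)] by auto
  have "j \<in> component n H i" using ij S unfolding component_def by auto
  then have "component n H j = component n H i" using pf_mem[OF comp_pf S] by simp
  then show "(i, j) \<in> G \<and> component n H i = component n H j" using G by simp
next
  assume a: "(i, j) \<in> G \<and> component n H i = component n H j"
  then have S: "i \<in> {1..n}" "j \<in> {1..n}" using simple_in[OF assms(1)] by auto
  have "component n H i \<in> comp_partition n H" using S unfolding comp_partition_def by simp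
  moreover have "i \<in> component n H i" using pf_self[OF comp_pf S(1)] .
  moreover have "j \<in> component n H i" using pf_self[OF comp_pf S(2)] a by simp
  ultimately show "(i, j) \<in> H" using a assms(2) unfolding is_bond_def by blast
qed

lemma NC_sub: "H \<in> NC n G \<Longrightarrow> H \<subseteq> G"
  unfolding NC_def noncrossing_bond_def is_bond_def by auto

lemma NC_bond: "H \<in> NC n G \<Longrightarrow> is_bond n G H"
  unfolding NC_def noncrossing_bond_def by auto

lemma finite_G: "simple_graph n G \<Longrightarrow> finite G"
  by (rule finite_subset[of G "{1..n} \<times> {1..n}"]) (auto simp: simple_graph_def)

lemma finite_NC: assumes "simple_graph n G" shows "finite (NC n G)"
proof -
  have "NC n G \<subseteq> Pow G" using NC_sub by blast
  then show ?thesis using finite_G[OF assms] by (simp add: finite_subset)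
qed

lemma comp_empty: "v \<in> {1..n} \<Longrightarrow> component n {} v = {v}"
  unfolding component_def by auto

lemma empty_NC:
  assumes "simple_graph n G"
  shows "{} \<in> NC n G" "cc n {} = n"
proof -
  have cp: "comp_partition n {} = (\<lambda>v. {v}) ` {1..n}"
    unfolding comp_partition_def using comp_empty by (auto simp: image_iff)
  show "cc n {} = n" unfolding cc_def cp by (simp add: card_image)
  have bond: "is_bond n G {}"
    unfolding is_bond_def cp using simple_in[OF assms] by fastforce
  have nc: "noncrossing (comp_partition n {})"
    unfolding noncrossing_def crossing_def cp by auto
  show "{} \<in> NC n G" unfolding NC_def noncrossing_bond_def using bond nc by simp
qed

lemma strict_cc:
  assumes sg: "simple_graph n G" and H1: "H1 \<in> NC n G" and H2: "H2 \<in> NC n G" and sub: "H1 \<subset> H2"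
  shows "cc n H2 < cc n H1"
proof -
  have ref: "\<forall>v\<in>{1..n}. component n H1 v \<subseteq> component n H2 v" using comp_mono sub by blast
  have cr: "cc n H2 \<le> cc n H1 \<and> (cc n H2 = cc n H1 \<longleftrightarrow>
     (\<forall>u\<in>{1..n}. \<forall>v\<in>{1..n}. component n H2 u = component n H2 v \<longrightarrow> component n H1 u = component n H1 v))"
    unfolding cc_def comp_partition_def by (rule card_refine[OF finite_atLeastAtMost comp_pf comp_pf ref])
  have le: "cc n H2 \<le> cc n H1" using cr by blast
  moreover have "cc n H2 \<noteq> cc n H1"
  proof
    assume eq: "cc n H2 = cc n H1"
    then have ker: "\<forall>u\<in>{1..n}. \<forall>v\<in>{1..n}. component n H2 u = component n H2 v \<longrightarrow> component n H1 u = component n H1 v"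
      using cr by blast
    have "H2 \<subseteq> H1"
    proof
      fix e assume e: "e \<in> H2"
      obtain i j where ij: "e = (i, j)" by fastforce
      have "(i, j) \<in> G \<and> component n H2 i = component n H2 j"
        using bond_char[OF sg NC_bond[OF H2]] e ij by simp
      moreover then have "i \<in> {1..n}" "j \<in> {1..n}" using simple_in[OF sg] by auto
      ultimately have "(i, j) \<in> G \<and> component n H1 i = component n H1 j" using ker by blast
      then show "e \<in> H1" using bond_char[OF sg NC_bond[OF H1]] ij by simp
    qed
    then show False using sub by blast
  qed
  ultimately show ?thesis by simp
qed

lemma cc_of_merge:
  assumes "merges_two_blocks (comp_partition n H) (comp_partition n H')"
  shows "cc n H' + 1 = cc n H"
proof -
  obtain B1 B2 where B: "B1 \<in> comp_partition n H" "B2 \<in> comp_partition n H" "B1 \<noteq> B2"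
    "comp_partition n H' = (comp_partition n H - {B1, B2}) \<union> {B1 \<union> B2}"
    using assms unfolding merges_two_blocks_def by blast
  obtain u w where uw: "u \<in> {1..n}" "w \<in> {1..n}" "B1 = component n H u" "B2 = component n H w"
    using B(1,2) unfolding comp_partition_def by blast
  have ne: "component n H u \<noteq> component n H w" using B(3) uw by simp
  have m: "card ((component n H ` {1..n} - {component n H u, component n H w}) \<union> {component n H u \<union> component n H w}) + 1
      = card (component n H ` {1..n})"
    by (rule merge_card[OF finite_atLeastAtMost comp_pf uw(1,2) ne])
  have "cc n H' = card ((comp_partition n H - {B1, B2}) \<union> {B1 \<union> B2})"
    unfolding cc_def B(4) ..
  then show ?thesis using m unfolding cc_def comp_partition_def uw(3,4) by simp
qed

lemma merge_of_cc:
  assumes "H \<subseteq> H'" "cc n H = cc n H' + 1"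
  shows "merges_two_blocks (comp_partition n H) (comp_partition n H')"
proof -
  have ref: "\<forall>v\<in>{1..n}. component n H v \<subseteq> component n H' v" using comp_mono assms(1) by blast
  have c: "card (component n H ` {1..n}) = card (component n H' ` {1..n}) + 1"
    using assms(2) unfolding cc_def comp_partition_def .
  show ?thesis unfolding comp_partition_def
    by (rule merges_of_card[OF finite_atLeastAtMost comp_pf comp_pf ref c])
qed


lemma lower_cover:
  assumes sg: "simple_graph n G" and HN: "H \<in> NC n G" and ne: "H \<noteq> {}"
  shows "\<exists>H''\<in>NC n G. H'' \<subseteq> H \<and> cc n H'' = cc n H + 1"
proof -
  define R where "R = H \<union> H\<inverse>"
  have HG: "H \<subseteq> G" using NC_sub[OF HN] .
  have Hin: "\<And>i j. (i, j) \<in> H \<Longrightarrow> i \<in> {1..n} \<and> j \<in> {1..n} \<and> i < j"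
    using simple_in[OF sg] HG by blast
  have Rin: "\<And>x y. (x, y) \<in> R \<Longrightarrow> x \<in> {1..n} \<and> y \<in> {1..n}"
    unfolding R_def using Hin by blast
  obtain r s where rs: "(r, s) \<in> H" using ne by auto
  have rS: "r \<in> {1..n}" "s \<in> {1..n}" "r < s" using Hin[OF rs] by auto
  define B where "B = component n H r"
  have compR: "\<And>x. component n H x = {u \<in> {1..n}. (x, u) \<in> R\<^sup>*}" unfolding component_def R_def ..
  have Bmem: "\<And>u. u \<in> B \<longleftrightarrow> u \<in> {1..n} \<and> (r, u) \<in> R\<^sup>*" unfolding B_def compR by simp
  have BS: "B \<subseteq> {1..n}" using Bmem by blast
  have Bfin: "finite B" using BS finite_subset by blast
  define d where "d u = (LEAST k. (r, u) \<in> R ^^ k)" for u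
  have dpow: "(r, u) \<in> R ^^ d u" if "u \<in> B" for u
  proof -
    have "(r, u) \<in> R\<^sup>*" using that Bmem by blast
    then have "\<exists>k. (r, u) \<in> R ^^ k" using rtrancl_power by blast
    then show ?thesis unfolding d_def by (rule LeastI_ex)
  qed
  have dle: "d u \<le> k" if "(r, u) \<in> R ^^ k" for u k
    unfolding d_def using that by (rule Least_le)
  have sB: "s \<in> B" using Bmem rS rs unfolding R_def by blast
  have rB: "r \<in> B" using Bmem rS by blast
  define M where "M = Max (d ` B)"
  have "M \<in> d ` B" unfolding M_def using Bfin rB by (intro Max_in) auto
  then obtain v where v1: "v \<in> B" "d v = M" by auto
  have v: "v \<in> B" "\<forall>u\<in>B. d u \<le> d v" using v1 Bfin unfolding M_def by auto
  have vS: "v \<in> {1..n}" using v BS by blast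
  have "d s \<noteq> 0"
  proof
    assume "d s = 0"
    then have "(r, s) \<in> R ^^ 0" using dpow[OF sB] by simp
    then show False using rS by simp
  qed
  moreover have "d r = 0" using dle[of r 0] by simp
  ultimately have rv: "r \<noteq> v" using v sB by fastforce
  define H'' where "H'' = {(i, j) \<in> H. i \<noteq> v \<and> j \<noteq> v}"
  define R' where "R' = H'' \<union> H''\<inverse>"
  have R'eq: "\<And>x y. (x, y) \<in> R' \<longleftrightarrow> (x, y) \<in> R \<and> x \<noteq> v \<and> y \<noteq> v"
    unfolding R'_def H''_def R_def by auto
  have R'R: "R' \<subseteq> R" using R'eq by auto
  have compR': "\<And>x. component n H'' x = {u \<in> {1..n}. (x, u) \<in> R'\<^sup>*}" unfolding component_def R'_def ..
  have symR': "\<And>a b. (a, b) \<in> R'\<^sup>* \<Longrightarrow> (b, a) \<in> R'\<^sup>*" unfolding R'_def by (rule symR)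
  have symRR: "\<And>a b. (a, b) \<in> R\<^sup>* \<Longrightarrow> (b, a) \<in> R\<^sup>*" unfolding R_def by (rule symR)
  have K: "(r, u) \<in> R'\<^sup>*" if "u \<in> B" "u \<noteq> v" for u
    using that
  proof (induction "d u" arbitrary: u rule: less_induct)
    case less
    show ?case
    proof (cases "d u")
      case 0
      then have "(r, u) \<in> R ^^ 0" using dpow[OF less.prems(1)] by simp
      then show ?thesis by simp
    next
      case (Suc k)
      then have "(r, u) \<in> R ^^ Suc k" using dpow[OF less.prems(1)] by simp
      then obtain w where w: "(r, w) \<in> R ^^ k" "(w, u) \<in> R" by (rule relpow_Suc_E)
      have "d w \<le> k" by (rule dle[OF w(1)])
      then have dw: "d w < d u" using Suc by simp
      have wB: "w \<in> B" using Bmem Rin[OF w(2)] relpow_imp_rtrancl[OF w(1)] by blast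
      have "d u \<le> d v" using v less.prems(1) by blast
      then have wv: "w \<noteq> v" using dw by auto
      have "(r, w) \<in> R'\<^sup>*" using less.hyps[OF dw wB wv] .
      moreover have "(w, u) \<in> R'" using R'eq w(2) wv less.prems(2) by blast
      ultimately show ?thesis by (rule rtrancl_into_rtrancl)
    qed
  qed
  have avoid: "y = x \<or> y \<noteq> v" if "(x, y) \<in> R'\<^sup>*" for x y
    using that by (induction rule: rtrancl_induct) (auto simp: R'eq)
  have fromv: "y = v" if "(v, y) \<in> R'\<^sup>*" for y
    using that by (induction rule: rtrancl_induct) (auto simp: R'eq)
  have F1: "component n H'' v = {v}" unfolding compR' using fromv vS by auto
  have F2: "component n H'' x = B - {v}" if "x \<in> B" "x \<noteq> v" for x
  proof
    show "component n H'' x \<subseteq> B - {v}"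
    proof
      fix u assume "u \<in> component n H'' x"
      then have u: "u \<in> {1..n}" "(x, u) \<in> R'\<^sup>*" unfolding compR' by auto
      have "(x, u) \<in> R\<^sup>*" using rtrancl_mono[OF R'R] u(2) by blast
      moreover have "(r, x) \<in> R\<^sup>*" using that Bmem by blast
      ultimately have "(r, u) \<in> R\<^sup>*" by (rule rtrancl_trans[rotated])
      then have "u \<in> B" using Bmem u(1) by blast
      moreover have "u \<noteq> v" using avoid[OF u(2)] that(2) by blast
      ultimately show "u \<in> B - {v}" by blast
    qed
    show "B - {v} \<subseteq> component n H'' x"
    proof
      fix u assume u: "u \<in> B - {v}"
      have "(r, u) \<in> R'\<^sup>*" using K u by blast
      moreover have "(x, r) \<in> R'\<^sup>*" using symR'[OF K[OF that]] .
      ultimately have "(x, u) \<in> R'\<^sup>*" by (rule rtrancl_trans[rotated])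
      then show "u \<in> component n H'' x" unfolding compR' using u BS by blast
    qed
  qed
  have F3: "component n H'' x = component n H x" if "x \<in> {1..n}" "x \<notin> B" for x
  proof
    have sub: "H'' \<subseteq> H" unfolding H''_def by auto
    show "component n H'' x \<subseteq> component n H x" by (rule comp_mono[OF sub])
    have outB: "y \<notin> B" if "(x, y) \<in> R\<^sup>*" for y
    proof
      assume "y \<in> B"
      then have "(r, y) \<in> R\<^sup>*" using Bmem by blast
      moreover have "(y, x) \<in> R\<^sup>*" using symRR[OF that] .
      ultimately have "(r, x) \<in> R\<^sup>*" by (rule rtrancl_trans)
      then show False using \<open>x \<notin> B\<close> \<open>x \<in> {1..n}\<close> Bmem by blast
    qed
    have lift: "(x, y) \<in> R'\<^sup>*" if "(x, y) \<in> R\<^sup>*" for y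
      using that
    proof (induction rule: rtrancl_induct)
      case base then show ?case by simp
    next
      case (step y z)
      have "y \<notin> B" using outB step.hyps(1) by blast
      moreover have "(x, z) \<in> R\<^sup>*" using step.hyps by (rule rtrancl_into_rtrancl)
      then have "z \<notin> B" using outB by blast
      ultimately have "(y, z) \<in> R'" using R'eq step.hyps(2) v(1) by blast
      then show ?case using step.IH by (rule rtrancl_into_rtrancl[rotated])
    qed
    show "component n H x \<subseteq> component n H'' x"
      unfolding compR compR' using lift by blast
  qed
  have Bblock: "x \<in> B \<longleftrightarrow> component n H x = B" if "x \<in> {1..n}" for x
    unfolding B_def by (rule pf_mem[OF comp_pf rS(1) that])
  have H''G: "H'' \<subseteq> G" using HG unfolding H''_def by auto
  have bond: "is_bond n G H''"
    unfolding is_bond_def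
  proof (intro conjI ballI allI impI)
    show "H'' \<subseteq> G" by fact
    fix Bk i j assume Bk: "Bk \<in> comp_partition n H''" and ij: "(i, j) \<in> G \<and> i \<in> Bk \<and> j \<in> Bk"
    obtain x where x: "x \<in> {1..n}" "Bk = component n H'' x" using Bk unfolding comp_partition_def by blast
    have ijS: "i \<in> {1..n}" "j \<in> {1..n}" "i < j" using simple_in[OF sg] ij by auto
    have ci: "component n H'' i = Bk" using pf_mem[OF comp_pf x(1) ijS(1)] ij x by blast
    have cj: "component n H'' j = Bk" using pf_mem[OF comp_pf x(1) ijS(2)] ij x by blast
    have "j \<in> component n H'' i" using ci ij by simp
    then have "j \<in> component n H i" using comp_mono[of H'' H] unfolding H''_def by blast
    then have "component n H j = component n H i" using pf_mem[OF comp_pf ijS(1) ijS(2)] by blast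
    then have ijH: "(i, j) \<in> H" using bond_char[OF sg NC_bond[OF HN]] ij by simp
    have iv: "i \<noteq> v"
    proof
      assume "i = v"
      then have "Bk = {v}" using ci F1 by simp
      then show False using ij ijS(3) by auto
    qed
    have jv: "j \<noteq> v"
    proof
      assume "j = v"
      then have "Bk = {v}" using cj F1 by simp
      then show False using ij ijS(3) by auto
    qed
    show "(i, j) \<in> H''" using ijH iv jv unfolding H''_def by simp
  qed
  have ncH: "\<not> crossing (comp_partition n H)"
    using HN unfolding NC_def noncrossing_bond_def noncrossing_def by simp
  have nc: "\<not> crossing (comp_partition n H'')"
  proof
    assume "crossing (comp_partition n H'')"
    then obtain B1 B2 a b c e where cr: "B1 \<in> comp_partition n H''" "B2 \<in> comp_partition n H''" "B1 \<noteq> B2"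
      "a \<in> B1" "c \<in> B1" "b \<in> B2" "e \<in> B2" "a < b" "b < c" "c < e"
      unfolding crossing_def by blast
    obtain x1 where x1: "x1 \<in> {1..n}" "B1 = component n H'' x1" using cr(1) unfolding comp_partition_def by blast
    obtain x2 where x2: "x2 \<in> {1..n}" "B2 = component n H'' x2" using cr(2) unfolding comp_partition_def by blast
    have S: "a \<in> {1..n}" "c \<in> {1..n}" "b \<in> {1..n}" "e \<in> {1..n}"
      using pf_sub[OF comp_pf x1(1)] pf_sub[OF comp_pf x2(1)] cr x1 x2 by blast+
    have ca: "component n H'' a = B1" "component n H'' c = B1"
      using pf_mem[OF comp_pf x1(1)] S cr x1 by blast+
    have cb: "component n H'' b = B2" "component n H'' e = B2"
      using pf_mem[OF comp_pf x2(1)] S cr x2 by blast+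
    have av: "a \<noteq> v"
    proof
      assume "a = v" then have "B1 = {v}" using ca F1 by simp
      then show False using cr by auto
    qed
    have bv: "b \<noteq> v"
    proof
      assume "b = v" then have "B2 = {v}" using cb F1 by simp
      then show False using cr by auto
    qed
    have sub: "H'' \<subseteq> H" unfolding H''_def by auto
    have m1: "component n H'' a \<subseteq> component n H a" by (rule comp_mono[OF sub])
    have m2: "component n H'' b \<subseteq> component n H b" by (rule comp_mono[OF sub])
    have A1: "a \<in> component n H a" "c \<in> component n H a"
      by (rule pf_self[OF comp_pf S(1)]) (use m1 ca(1) cr(5) in blast)
    have A2: "b \<in> component n H b" "e \<in> component n H b"
      by (rule pf_self[OF comp_pf S(3)]) (use m2 cb(1) cr(7) in blast)
    show False
    proof (cases "component n H a = component n H b")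
      case False
      have M1: "component n H a \<in> comp_partition n H" using S unfolding comp_partition_def by auto
      have M2: "component n H b \<in> comp_partition n H" using S unfolding comp_partition_def by auto
      have "crossing (comp_partition n H)"
        unfolding crossing_def
      proof (rule bexI[OF _ M1], rule bexI[OF _ M2])
        show "component n H a \<noteq> component n H b \<and> (\<exists>a' b' c' d'. a' \<in> component n H a \<and> c' \<in> component n H a \<and>
          b' \<in> component n H b \<and> d' \<in> component n H b \<and> a' < b' \<and> b' < c' \<and> c' < d')"
          apply (rule conjI[OF False])
          apply (rule exI[of _ a], rule exI[of _ b], rule exI[of _ c], rule exI[of _ e])
          using A1 A2 cr(8-10) by simp
      qed
      then show False using ncH by simp
    next
      case True
      show False
      proof (cases "a \<in> B")
        case aB: True
        then have "component n H b = B" using True Bblock S by simp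
        then have bB: "b \<in> B" using Bblock S by simp
        have "B1 = B - {v}" using F2[OF aB av] ca by simp
        moreover have "B2 = B - {v}" using F2[OF bB bv] cb by simp
        ultimately show False using cr(3) by simp
      next
        case aB: False
        then have bB: "b \<notin> B" using True Bblock S by metis
        have "B1 = component n H a" using F3[OF S(1) aB] ca by simp
        moreover have "B2 = component n H b" using F3[OF S(3) bB] cb by simp
        ultimately show False using True cr(3) by simp
      qed
    qed
  qed
  have inNC: "H'' \<in> NC n G"
    unfolding NC_def noncrossing_bond_def noncrossing_def using bond nc by simp
  have cr'': "component n H'' r = B - {v}" using F2[OF rB rv] .
  have neq: "component n H'' v \<noteq> component n H'' r" using F1 cr'' by auto
  have mc: "card ((component n H'' ` {1..n} - {component n H'' v, component n H'' r}) \<union>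
      {component n H'' v \<union> component n H'' r}) + 1 = card (component n H'' ` {1..n})"
    by (rule merge_card[OF finite_atLeastAtMost comp_pf vS rS(1) neq])
  have Bu: "{v} \<union> (B - {v}) = B" using v(1) by blast
  have img: "component n H ` {1..n} = (component n H'' ` {1..n} - {{v}, B - {v}}) \<union> {B}"
  proof
    show "component n H ` {1..n} \<subseteq> (component n H'' ` {1..n} - {{v}, B - {v}}) \<union> {B}"
    proof
      fix X assume "X \<in> component n H ` {1..n}"
      then obtain x where x: "x \<in> {1..n}" "X = component n H x" by blast
      show "X \<in> (component n H'' ` {1..n} - {{v}, B - {v}}) \<union> {B}"
      proof (cases "x \<in> B")
        case True then show ?thesis using Bblock x by simp
      next
        case False
        have "X = component n H'' x" using F3[OF x(1) False] x by simp
        moreover have "x \<in> X" using x pf_self[OF comp_pf x(1)] by simp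
        ultimately show ?thesis using False v(1) x(1) by blast
      qed
    qed
    show "(component n H'' ` {1..n} - {{v}, B - {v}}) \<union> {B} \<subseteq> component n H ` {1..n}"
    proof
      fix X assume X: "X \<in> (component n H'' ` {1..n} - {{v}, B - {v}}) \<union> {B}"
      show "X \<in> component n H ` {1..n}"
      proof (cases "X = B")
        case True then show ?thesis unfolding B_def using rS by blast
      next
        case False
        then obtain x where x: "x \<in> {1..n}" "X = component n H'' x" "X \<noteq> {v}" "X \<noteq> B - {v}" using X by blast
        have "x \<noteq> v" using x F1 by blast
        moreover have "x \<notin> B" using x F2 \<open>x \<noteq> v\<close> by blast
        ultimately have "X = component n H x" using F3 x by simp
        then show ?thesis using x by blast
      qed
    qed
  qed
  have "cc n H'' = cc n H + 1"
    using mc unfolding cc_def comp_partition_def img F1 cr'' Bu by simp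
  moreover have "H'' \<subseteq> H" unfolding H''_def by auto
  ultimately show ?thesis using inNC by blast
qed


lemma NC_bounds: "H \<in> NC n G \<Longrightarrow> {} \<subseteq> H \<and> H \<subseteq> G"
  using NC_sub by blast

lemma chainH:
  assumes sg: "simple_graph n G"
  shows "H \<in> NC n G \<Longrightarrow> \<exists>C. sat (NC n G) C {} H \<and> card C = n - cc n H + 1"
proof (induction "card H" arbitrary: H rule: less_induct)
  case less
  show ?case
  proof (cases "H = {}")
    case True
    have "sat (NC n G) {{}} {} H"
      unfolding sat_def is_chain_def using True empty_NC(1)[OF sg] by auto
    moreover have "card {{}::(nat \<times> nat) set} = n - cc n H + 1" using True empty_NC(2)[OF sg] by simp
    ultimately show ?thesis by blast
  next
    case False
    obtain H'' where H'': "H'' \<in> NC n G" "H'' \<subseteq> H" "cc n H'' = cc n H + 1"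
      using lower_cover[OF sg less.prems False] by blast
    have ps: "H'' \<subset> H" using H'' by auto
    have finH: "finite H" using NC_sub[OF less.prems] finite_G[OF sg] finite_subset by blast
    have "card H'' < card H" by (rule psubset_card_mono[OF finH ps])
    then obtain C'' where C'': "sat (NC n G) C'' {} H''" "card C'' = n - cc n H'' + 1"
      using less.hyps H''(1) by blast
    note S = satD[OF C''(1)]
    have cov: "\<not> (\<exists>z\<in>NC n G. H'' \<subset> z \<and> z \<subset> H)"
    proof
      assume "\<exists>z\<in>NC n G. H'' \<subset> z \<and> z \<subset> H"
      then obtain z where z: "z \<in> NC n G" "H'' \<subset> z" "z \<subset> H" by blast
      have "cc n z < cc n H''" by (rule strict_cc[OF sg H''(1) z(1) z(2)])
      moreover have "cc n H < cc n z" by (rule strict_cc[OF sg z(1) less.prems z(3)])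
      ultimately show False using H''(3) by simp
    qed
    define C where "C = insert H C''"
    have sC: "sat (NC n G) C {} H"
      unfolding sat_def is_chain_def
    proof (intro conjI)
      show "C \<subseteq> NC n G" using S(1) less.prems unfolding C_def by blast
      show "\<forall>x\<in>C. \<forall>y\<in>C. x \<subseteq> y \<or> y \<subseteq> x"
        unfolding C_def using S(2,6) H''(2) by blast
      show "{} \<in> C" using S(3) unfolding C_def by blast
      show "H \<in> C" unfolding C_def by blast
      show "\<forall>x\<in>C. {} \<subseteq> x \<and> x \<subseteq> H" unfolding C_def using S(6) H''(2) by blast
      show "\<forall>z\<in>NC n G. {} \<subseteq> z \<and> z \<subseteq> H \<and> (\<forall>x\<in>C. x \<subseteq> z \<or> z \<subseteq> x) \<longrightarrow> z \<in> C"
      proof (intro ballI impI)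
        fix z assume z: "z \<in> NC n G" "{} \<subseteq> z \<and> z \<subseteq> H \<and> (\<forall>x\<in>C. x \<subseteq> z \<or> z \<subseteq> x)"
        have cmp: "\<forall>x\<in>C''. x \<subseteq> z \<or> z \<subseteq> x" using z unfolding C_def by blast
        have "H'' \<subseteq> z \<or> z \<subseteq> H''" using cmp S(4) by blast
        then show "z \<in> C"
        proof
          assume "z \<subseteq> H''"
          then have "z \<in> C''" using S(7)[OF z(1)] cmp by blast
          then show ?thesis unfolding C_def by blast
        next
          assume hz: "H'' \<subseteq> z"
          show ?thesis
          proof (cases "z = H''")
            case True then show ?thesis using S(4) unfolding C_def by blast
          next
            case False
            then have "z = H" using cov z hz by blast
            then show ?thesis unfolding C_def by blast
          qed
        qed
      qed
    qed
    have finC'': "finite C''" using S(1) finite_NC[OF sg] finite_subset by blast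
    have "H \<notin> C''" using S(6) ps by blast
    then have "card C = card C'' + 1" unfolding C_def using finC'' by simp
    moreover have "cc n H'' \<le> n" by (rule cc_le)
    ultimately have "card C = n - cc n H + 1" using C''(2) H''(3) by simp
    then show ?thesis using sC by blast
  qed
qed

lemma sat_restrict:
  assumes "sat Q D lo hi" "Q = {z\<in>P. z \<subseteq> hi}"
  shows "sat P D lo hi"
proof -
  note S = satD[OF assms(1)]
  show ?thesis unfolding sat_def is_chain_def
  proof (intro conjI)
    show "D \<subseteq> P" using S(1) assms(2) by blast
    show "\<forall>x\<in>D. \<forall>y\<in>D. x \<subseteq> y \<or> y \<subseteq> x" using S(2) by blast
    show "lo \<in> D" "hi \<in> D" using S(3,4) by blast+
    show "\<forall>x\<in>D. lo \<subseteq> x \<and> x \<subseteq> hi" using S(5,6) by blast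
    show "\<forall>z\<in>P. lo \<subseteq> z \<and> z \<subseteq> hi \<and> (\<forall>x\<in>D. x \<subseteq> z \<or> z \<subseteq> x) \<longrightarrow> z \<in> D"
    proof (intro ballI impI)
      fix z assume z: "z \<in> P" "lo \<subseteq> z \<and> z \<subseteq> hi \<and> (\<forall>x\<in>D. x \<subseteq> z \<or> z \<subseteq> x)"
      have "z \<in> Q" using z assms(2) by blast
      then show "z \<in> D" using S(7)[of z] z by blast
    qed
  qed
qed

lemma covers_merge_graded:
  assumes sg: "simple_graph n G" and GG: "G \<in> NC n G"
    and cm: "\<forall>H H'. covers (NC n G) H H' \<longrightarrow> merges_two_blocks (comp_partition n H) (comp_partition n H')"
  shows "graded (NC n G) \<and> (\<forall>H\<in>NC n G. poset_rank (NC n G) H = n - cc n H)"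
proof -
  define P where "P = NC n G"
  define f where "f H = n - cc n H" for H
  have finP: "finite P" unfolding P_def by (rule finite_NC[OF sg])
  have fcov: "f y = f x + 1" if "covers P x y" for x y
  proof -
    have "cc n y + 1 = cc n x" using cm that cc_of_merge unfolding P_def by blast
    moreover have "cc n x \<le> n" by (rule cc_le)
    ultimately show ?thesis unfolding f_def by simp
  qed
  have f0: "f {} = 0" unfolding f_def using empty_NC(2)[OF sg] by simp
  have e: "{} \<in> P" unfolding P_def by (rule empty_NC(1)[OF sg])
  have GP: "G \<in> P" unfolding P_def by (rule GG)
  have bnd: "\<forall>x\<in>P. {} \<subseteq> x \<and> x \<subseteq> G" unfolding P_def using NC_bounds by blast
  have gr: "graded P"
    unfolding graded_def
  proof (intro allI impI)
    fix C D assume CD: "maximal_chain P C \<and> maximal_chain P D"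
    have "card C + f {} = f G + 1"
      by (rule sat_card[OF finP fcov maximal_sat[OF conjunct1[OF CD] e GP bnd]])
    moreover have "card D + f {} = f G + 1"
      by (rule sat_card[OF finP fcov maximal_sat[OF conjunct2[OF CD] e GP bnd]])
    ultimately show "card C = card D" by simp
  qed
  have rk: "poset_rank P H = f H" if HP: "H \<in> P" for H
  proof -
    define A where "A = {card C - 1 | C. is_chain P C \<and> finite C \<and> H \<in> C \<and> (\<forall>y\<in>C. y \<subseteq> H)}"
    have up: "a \<le> f H" if "a \<in> A" for a
    proof -
      obtain C where C: "a = card C - 1" "is_chain P C" "finite C" "H \<in> C" "\<forall>y\<in>C. y \<subseteq> H"
        using \<open>a \<in> A\<close> unfolding A_def by blast
      define Q where "Q = {z\<in>P. z \<subseteq> H}"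
      have finQ: "finite Q" unfolding Q_def using finP by simp
      have "is_chain Q C" using C unfolding is_chain_def Q_def by blast
      then obtain D where D: "maximal_chain Q D" "C \<subseteq> D" using exists_maximal[OF finQ] by blast
      have eQ: "{} \<in> Q" unfolding Q_def using e by simp
      have HQ: "H \<in> Q" unfolding Q_def using HP by simp
      have bQ: "\<forall>x\<in>Q. {} \<subseteq> x \<and> x \<subseteq> H" unfolding Q_def by blast
      have "sat Q D {} H" by (rule maximal_sat[OF D(1) eQ HQ bQ])
      then have sP: "sat P D {} H" using sat_restrict Q_def by blast
      have "card D + f {} = f H + 1" by (rule sat_card[OF finP fcov sP])
      moreover have "finite D" using satD(1)[OF sP] finP finite_subset by blast
      then have "card C \<le> card D" using D(2) card_mono by blast
      ultimately show ?thesis using C(1) f0 by simp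
    qed
    obtain C where C: "sat P C {} H" "card C = n - cc n H + 1"
      using chainH[OF sg] HP unfolding P_def by blast
    have "f H \<in> A"
    proof -
      have "is_chain P C" using C(1) unfolding sat_def by blast
      moreover have "finite C" using satD(1)[OF C(1)] finP finite_subset by blast
      moreover have "H \<in> C" using satD(4)[OF C(1)] .
      moreover have "\<forall>y\<in>C. y \<subseteq> H" using satD(6)[OF C(1)] by blast
      moreover have "f H = card C - 1" using C(2) unfolding f_def by simp
      ultimately show ?thesis unfolding A_def by blast
    qed
    moreover have "finite A" using up by (meson finite_atMost finite_subset subsetI atMost_iff)
    ultimately have "Max A = f H" using up by (intro Max_eqI) auto
    then show ?thesis unfolding poset_rank_def A_def .
  qed
  show ?thesis using gr rk unfolding P_def f_def by blast
qed


lemma graded_covers_merge: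
  assumes sg: "simple_graph n G" and GG: "G \<in> NC n G" and gr: "graded (NC n G)"
    and cov: "covers (NC n G) H H'"
  shows "merges_two_blocks (comp_partition n H) (comp_partition n H')"
proof -
  define P where "P = NC n G"
  have finP: "finite P" unfolding P_def by (rule finite_NC[OF sg])
  have e: "{} \<in> P" unfolding P_def by (rule empty_NC(1)[OF sg])
  have GP: "G \<in> P" unfolding P_def by (rule GG)
  have bnd: "\<forall>x\<in>P. {} \<subseteq> x \<and> x \<subseteq> G" unfolding P_def using NC_bounds by blast
  have HP: "H \<in> P" and H'P: "H' \<in> P" and HH': "H \<subset> H'"
    and nz: "\<not> (\<exists>z\<in>P. H \<subset> z \<and> z \<subset> H')"
    using cov unfolding covers_def P_def by auto
  obtain CH where CH: "sat P CH {} H" "card CH = n - cc n H + 1"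
    using chainH[OF sg] HP unfolding P_def by blast
  obtain CH' where CH': "sat P CH' {} H'" "card CH' = n - cc n H' + 1"
    using chainH[OF sg] H'P unfolding P_def by blast
  note S1 = satD[OF CH(1)]
  note S2 = satD[OF CH'(1)]
  define C1 where "C1 = insert H' CH"
  have chC1: "is_chain P C1"
    unfolding is_chain_def C1_def using S1(1,2,6) H'P HH' by blast
  obtain D1 where D1: "maximal_chain P D1" "C1 \<subseteq> D1" using exists_maximal[OF finP chC1] by blast
  have sD1: "sat P D1 {} G" by (rule maximal_sat[OF D1(1) e GP bnd])
  note S3 = satD[OF sD1]
  define U where "U = {x\<in>D1. \<not> x \<subseteq> H'}"
  have H'D1: "H' \<in> D1" using D1(2) unfolding C1_def by blast
  have HD1: "H \<in> D1" using D1(2) S1(4) unfolding C1_def by blast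
  have D1eq: "D1 = C1 \<union> U"
  proof
    show "C1 \<union> U \<subseteq> D1" using D1(2) unfolding U_def by blast
    show "D1 \<subseteq> C1 \<union> U"
    proof
      fix x assume x: "x \<in> D1"
      show "x \<in> C1 \<union> U"
      proof (cases "x \<subseteq> H'")
        case False then show ?thesis unfolding U_def using x by blast
      next
        case xH': True
        have "x \<subseteq> H \<or> H \<subseteq> x" using S3(2)[OF x HD1] .
        then show ?thesis
        proof
          assume xH: "x \<subseteq> H"
          have xP: "x \<in> P" using S3(1) x by blast
          have "\<And>y. y \<in> CH \<Longrightarrow> y \<subseteq> x \<or> x \<subseteq> y" using S3(2)[OF _ x] D1(2) unfolding C1_def by blast
          then have "x \<in> CH" using S1(7)[OF xP _ xH] by blast
          then show ?thesis unfolding C1_def by blast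
        next
          assume Hx: "H \<subseteq> x"
          have xP: "x \<in> P" using S3(1) x by blast
          have "x = H \<or> x = H'" using nz xP Hx xH' by blast
          then show ?thesis using S1(4) unfolding C1_def by blast
        qed
      qed
    qed
  qed
  have C1U: "C1 \<inter> U = {}" unfolding C1_def U_def using S1(6) HH' by blast
  define D2 where "D2 = CH' \<union> U"
  have UH': "\<And>y. y \<in> U \<Longrightarrow> H' \<subseteq> y" unfolding U_def using S3(2)[OF _ H'D1] by blast
  have sD2: "sat P D2 {} G"
    unfolding sat_def is_chain_def
  proof (intro conjI)
    show "D2 \<subseteq> P" unfolding D2_def U_def using S2(1) S3(1) by blast
    show "\<forall>x\<in>D2. \<forall>y\<in>D2. x \<subseteq> y \<or> y \<subseteq> x"
    proof (intro ballI)
      fix x y assume x: "x \<in> D2" and y: "y \<in> D2"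
      show "x \<subseteq> y \<or> y \<subseteq> x"
      proof (cases "x \<in> CH'")
        case xC: True
        show ?thesis
        proof (cases "y \<in> CH'")
          case True then show ?thesis using S2(2) xC by blast
        next
          case False then have "y \<in> U" using y unfolding D2_def by blast
          then show ?thesis using UH' S2(6)[OF xC] by blast
        qed
      next
        case xC: False
        then have xU: "x \<in> U" using x unfolding D2_def by blast
        show ?thesis
        proof (cases "y \<in> CH'")
          case True then show ?thesis using UH'[OF xU] S2(6)[OF True] by blast
        next
          case False then have "y \<in> U" using y unfolding D2_def by blast
          then show ?thesis using xU S3(2) unfolding U_def by blast
        qed
      qed
    qed
    show "{} \<in> D2" using S2(3) unfolding D2_def by blast
    show "G \<in> D2"
    proof (cases "G \<subseteq> H'")
      case True
      then have "G = H'" using bnd H'P by blast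
      then show ?thesis using S2(4) unfolding D2_def by blast
    next
      case False then show ?thesis using S3(4) unfolding D2_def U_def by blast
    qed
    show "\<forall>x\<in>D2. {} \<subseteq> x \<and> x \<subseteq> G" using \<open>D2 \<subseteq> P\<close> bnd by blast
    show "\<forall>z\<in>P. {} \<subseteq> z \<and> z \<subseteq> G \<and> (\<forall>x\<in>D2. x \<subseteq> z \<or> z \<subseteq> x) \<longrightarrow> z \<in> D2"
    proof (intro ballI impI)
      fix z assume zP: "z \<in> P" and z: "{} \<subseteq> z \<and> z \<subseteq> G \<and> (\<forall>x\<in>D2. x \<subseteq> z \<or> z \<subseteq> x)"
      show "z \<in> D2"
      proof (cases "z \<subseteq> H'")
        case True
        have "\<And>x. x \<in> CH' \<Longrightarrow> x \<subseteq> z \<or> z \<subseteq> x" using z unfolding D2_def by blast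
        then have "z \<in> CH'" using S2(7)[OF zP _ True] by blast
        then show ?thesis unfolding D2_def by blast
      next
        case False
        have "H' \<subseteq> z \<or> z \<subseteq> H'" using z S2(4) unfolding D2_def by blast
        then have H'z: "H' \<subseteq> z" using False by blast
        have cmp: "\<And>x. x \<in> D1 \<Longrightarrow> x \<subseteq> z \<or> z \<subseteq> x"
        proof -
          fix x assume x: "x \<in> D1"
          show "x \<subseteq> z \<or> z \<subseteq> x"
          proof (cases "x \<subseteq> H'")
            case True then show ?thesis using H'z by blast
          next
            case False then have "x \<in> D2" using x unfolding D2_def U_def by blast
            then show ?thesis using z by blast
          qed
        qed
        have "z \<in> D1" using S3(7)[OF zP _ _ cmp] z by blast
        then show ?thesis using False unfolding D2_def U_def by blast
      qed
    qed
  qed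
  have mD2: "maximal_chain P D2" by (rule sat_maximal[OF sD2 bnd])
  have eqc: "card D1 = card D2" using gr D1(1) mD2 unfolding graded_def P_def by blast
  have finD1: "finite D1" using S3(1) finP finite_subset by blast
  have finU: "finite U" using finD1 unfolding U_def by simp
  have finCH: "finite CH" using S1(1) finP finite_subset by blast
  have finCH': "finite CH'" using S2(1) finP finite_subset by blast
  have "H' \<notin> CH" using S1(6) HH' by blast
  then have cC1: "card C1 = card CH + 1" unfolding C1_def using finCH by simp
  have "card D1 = card C1 + card U"
    unfolding D1eq by (rule card_Un_disjoint) (use finCH finU C1U in \<open>auto simp: C1_def\<close>)
  moreover have "card D2 = card CH' + card U"
    unfolding D2_def by (rule card_Un_disjoint) (use finCH' finU S2(6) in \<open>auto simp: U_def\<close>)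
  ultimately have "n - cc n H + 2 = n - cc n H' + 1" using eqc cC1 CH(2) CH'(2) by simp
  moreover have "cc n H \<le> n" "cc n H' \<le> n" by (rule cc_le)+
  ultimately have "cc n H = cc n H' + 1" by simp
  then show ?thesis using merge_of_cc HH' by blast
qed

theorem proposition2p10:
  fixes n :: nat and G :: "(nat \<times> nat) set"
  assumes "simple_graph n G"
    and "noncrossing_bond n G G"
  shows "(graded (NC n G) \<longleftrightarrow>
           (\<forall>H H'. covers (NC n G) H H' \<longrightarrow>
              merges_two_blocks (comp_partition n H) (comp_partition n H')))
       \<and> (graded (NC n G) \<longrightarrow>
           (\<forall>H \<in> NC n G. poset_rank (NC n G) H = n - cc n H))"
proof -
  have GG: "G \<in> NC n G" using assms(2) unfolding NC_def by simp
  have A: "graded (NC n G) \<Longrightarrow> (\<forall>H H'. covers (NC n G) H H' \<longrightarrow>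
              merges_two_blocks (comp_partition n H) (comp_partition n H'))"
    using graded_covers_merge[OF assms(1) GG] by blast
  show ?thesis using A covers_merge_graded[OF assms(1) GG] by blast
qed

end
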